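(* Let $T$ be a skew-nontrivial tree and let $S\subseteq W^{\emptyset}_-(T)$. Then $S$ is a PSD forcing set of $SD_2(T)$ if and only if $S$ is a skew forcing set of $T$.
   Context: Skew forcing: vertices are colored blue or white; if any vertex $u$ (blue or white) has exactly one white neighbor $v$, then $u$ may force $v$ to become blue; a skew forcing set is a set of initially blue vertices from which repeated forcing turns all vertices blue. PSD forcing: if $B$ is the current blue set, $C$ a component of $G-B$, and $u$ a blue vertex with $N_G(u)\cap V(C)=\{v\}$, then $u$ may force $v$; a PSD forcing set is defined analogously. $B^{\emptyset}_-(T)$ is the set of vertices that become blue when the skew forcing rule is applied starting from the empty set until no more forces are possible, and $W^{\emptyset}_-(T)=V(T)\setminus B^{\emptyset}_-(T)$. The skew-nontrivial subgraph $\check G$ of $G$ is obtained by computing $B^{\emptyset}_-(G)$, then deleting each vertex of $B^{\emptyset}_-(G)$ all of whose neighbors are in $B^{\emptyset}_-(G)$, and deleting each edge with both endpoints in $B^{\emptyset}_-(G)$; $T$ is skew-nontrivial if $\check T=T$. The special distance-2 graph $SD_2(T)$ has vertex set $W^{\emptyset}_-(T)$, with $u,w$ adjacent iff $u\ne w$ and $N_T(u)\cap N_T(w)\neq\emptyset$. *)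

theory Defs
  imports Main
begin

definition graph :: "'a set \<Rightarrow> ('a \<Rightarrow> 'a \<Rightarrow> bool) \<Rightarrow> bool" where
  "graph V E \<longleftrightarrow> finite V \<and> (\<forall>u v. E u v \<longrightarrow> E v u) \<and> (\<forall>u. \<not> E u u)
     \<and> (\<forall>u v. E u v \<longrightarrow> u \<in> V \<and> v \<in> V)"

definition nbhd :: "('a \<Rightarrow> 'a \<Rightarrow> bool) \<Rightarrow> 'a \<Rightarrow> 'a set" where
  "nbhd E u = {v. E u v}"

definition connected_graph :: "'a set \<Rightarrow> ('a \<Rightarrow> 'a \<Rightarrow> bool) \<Rightarrow> bool" where
  "connected_graph V E \<longleftrightarrow> (\<forall>u\<in>V. \<forall>v\<in>V. E\<^sup>*\<^sup>* u v)"

definition is_cycle :: "('a \<Rightarrow> 'a \<Rightarrow> bool) \<Rightarrow> 'a list \<Rightarrow> bool" where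
  "is_cycle E cs \<longleftrightarrow> length cs \<ge> 3 \<and> distinct cs
     \<and> (\<forall>i. Suc i < length cs \<longrightarrow> E (cs ! i) (cs ! Suc i))
     \<and> E (last cs) (hd cs)"

definition tree :: "'a set \<Rightarrow> ('a \<Rightarrow> 'a \<Rightarrow> bool) \<Rightarrow> bool" where
  "tree V E \<longleftrightarrow> graph V E \<and> V \<noteq> {} \<and> connected_graph V E \<and> (\<nexists>cs. is_cycle E cs)"

text \<open>One skew force: some vertex u (blue or white) has exactly one white neighbor v,
which becomes blue.  skew_reach V E B B' : B' is obtainable from B by a sequence of forces.\<close>
inductive skew_reach :: "'a set \<Rightarrow> ('a \<Rightarrow> 'a \<Rightarrow> bool) \<Rightarrow> 'a set \<Rightarrow> 'a set \<Rightarrow> bool"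
  for V E where
  refl: "skew_reach V E B B"
| step: "skew_reach V E B B' \<Longrightarrow> u \<in> V \<Longrightarrow> nbhd E u - B' = {v}
          \<Longrightarrow> skew_reach V E B (insert v B')"

definition skew_forcing_set :: "'a set \<Rightarrow> ('a \<Rightarrow> 'a \<Rightarrow> bool) \<Rightarrow> 'a set \<Rightarrow> bool" where
  "skew_forcing_set V E S \<longleftrightarrow> S \<subseteq> V \<and> skew_reach V E S V"

definition skew_closure_empty :: "'a set \<Rightarrow> ('a \<Rightarrow> 'a \<Rightarrow> bool) \<Rightarrow> 'a set" where
  "skew_closure_empty V E = \<Union>{B. skew_reach V E {} B}"

definition skew_white_empty :: "'a set \<Rightarrow> ('a \<Rightarrow> 'a \<Rightarrow> bool) \<Rightarrow> 'a set" where
  "skew_white_empty V E = V - skew_closure_empty V E"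

text \<open>Vertex set of the component of G - B containing v (for v in V - B).\<close>
definition comp_minus :: "'a set \<Rightarrow> ('a \<Rightarrow> 'a \<Rightarrow> bool) \<Rightarrow> 'a set \<Rightarrow> 'a \<Rightarrow> 'a set" where
  "comp_minus V E B v =
     {w. (\<lambda>x y. E x y \<and> x \<in> V - B \<and> y \<in> V - B)\<^sup>*\<^sup>* v w}"

inductive psd_reach :: "'a set \<Rightarrow> ('a \<Rightarrow> 'a \<Rightarrow> bool) \<Rightarrow> 'a set \<Rightarrow> 'a set \<Rightarrow> bool"
  for V E where
  refl: "psd_reach V E B B"
| step: "psd_reach V E B B' \<Longrightarrow> u \<in> B' \<inter> V \<Longrightarrow> v \<in> V - B'
          \<Longrightarrow> nbhd E u \<inter> comp_minus V E B' v = {v}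
          \<Longrightarrow> psd_reach V E B (insert v B')"

definition psd_forcing_set :: "'a set \<Rightarrow> ('a \<Rightarrow> 'a \<Rightarrow> bool) \<Rightarrow> 'a set \<Rightarrow> bool" where
  "psd_forcing_set V E S \<longleftrightarrow> S \<subseteq> V \<and> psd_reach V E S V"

definition skew_nontriv_V :: "'a set \<Rightarrow> ('a \<Rightarrow> 'a \<Rightarrow> bool) \<Rightarrow> 'a set" where
  "skew_nontriv_V V E =
     V - {u \<in> skew_closure_empty V E. nbhd E u \<subseteq> skew_closure_empty V E}"

definition skew_nontriv_E :: "'a set \<Rightarrow> ('a \<Rightarrow> 'a \<Rightarrow> bool) \<Rightarrow> 'a \<Rightarrow> 'a \<Rightarrow> bool" where
  "skew_nontriv_E V E = (\<lambda>u v. E u v \<and>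
     \<not> (u \<in> skew_closure_empty V E \<and> v \<in> skew_closure_empty V E))"

definition skew_nontrivial :: "'a set \<Rightarrow> ('a \<Rightarrow> 'a \<Rightarrow> bool) \<Rightarrow> bool" where
  "skew_nontrivial V E \<longleftrightarrow> skew_nontriv_V V E = V \<and> skew_nontriv_E V E = E"

definition SD2_V :: "'a set \<Rightarrow> ('a \<Rightarrow> 'a \<Rightarrow> bool) \<Rightarrow> 'a set" where
  "SD2_V V E = skew_white_empty V E"

definition SD2_E :: "'a set \<Rightarrow> ('a \<Rightarrow> 'a \<Rightarrow> bool) \<Rightarrow> 'a \<Rightarrow> 'a \<Rightarrow> bool" where
  "SD2_E V E = (\<lambda>u w. u \<in> SD2_V V E \<and> w \<in> SD2_V V E \<and> u \<noteq> w
                    \<and> nbhd E u \<inter> nbhd E w \<noteq> {})"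

end

theory Submission
  imports Defs
begin

lemma skew_reach_sub: "skew_reach V E X B \<Longrightarrow> X \<subseteq> B"
  by (induction rule: skew_reach.induct) auto

lemma skew_reach_in: "skew_reach V E X B \<Longrightarrow> graph V E \<Longrightarrow> B \<subseteq> X \<union> V"
proof (induction rule: skew_reach.induct)
  case (step B B' u v)
  then have "E u v" by (auto simp: nbhd_def)
  then have "v \<in> V" using step.prems by (auto simp: graph_def)
  then show ?case using step by auto
qed simp

lemma skew_reach_trans: "skew_reach V E B C \<Longrightarrow> skew_reach V E A B \<Longrightarrow> skew_reach V E A C"
  by (induction rule: skew_reach.induct) (auto intro: skew_reach.step)

lemma skew_reach_mono: "skew_reach V E X B \<Longrightarrow> X \<subseteq> Y \<Longrightarrow> skew_reach V E Y (Y \<union> B)"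
proof (induction rule: skew_reach.induct)
  case (refl B)
  then show ?case by (simp add: Un_absorb2 skew_reach.refl)
next
  case (step B1 B' u v)
  then have IH: "skew_reach V E Y (Y \<union> B')" by simp
  show ?case
  proof (cases "v \<in> Y \<union> B'")
    case True
    then have "Y \<union> insert v B' = Y \<union> B'" by auto
    with IH show ?thesis by simp
  next
    case False
    then have "nbhd E u - (Y \<union> B') = {v}" using step.hyps(3) by auto
    from skew_reach.step[OF IH step.hyps(2) this] show ?thesis by simp
  qed
qed

lemma skew_reach_Un: "skew_reach V E {} B1 \<Longrightarrow> skew_reach V E {} B2 \<Longrightarrow> skew_reach V E {} (B1 \<union> B2)"
  using skew_reach_mono[of V E "{}" B2 B1] skew_reach_trans by blast

lemma skew_reach_Union: "finite F \<Longrightarrow> (\<forall>B\<in>F. skew_reach V E {} B) \<Longrightarrow> skew_reach V E {} (\<Union>F)"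
  by (induction rule: finite_induct) (auto intro: skew_reach.refl skew_reach_Un)

lemma rtranclp_distinct_path:
  assumes "R\<^sup>*\<^sup>* x y"
  shows "\<exists>xs. xs \<noteq> [] \<and> distinct xs \<and> hd xs = x \<and> last xs = y \<and>
           (\<forall>i. Suc i < length xs \<longrightarrow> R (xs!i) (xs!Suc i))"
  using assms
proof (induction rule: converse_rtranclp_induct)
  case base
  then show ?case by (intro exI[of _ "[y]"]) auto
next
  case (step x z)
  then obtain ys where ys: "ys \<noteq> []" "distinct ys" "hd ys = z" "last ys = y"
    "\<forall>i. Suc i < length ys \<longrightarrow> R (ys!i) (ys!Suc i)" by blast
  show ?case
  proof (cases "x \<in> set ys")
    case True
    then obtain k where k: "k < length ys" "ys!k = x" by (auto simp: in_set_conv_nth)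
    show ?thesis
      apply (rule exI[of _ "drop k ys"])
      using ys k by (auto simp: hd_drop_conv_nth last_drop)
  next
    case False
    have "\<forall>i. Suc i < length (x#ys) \<longrightarrow> R ((x#ys)!i) ((x#ys)!Suc i)"
    proof (intro allI impI)
      fix i assume "Suc i < length (x#ys)"
      then show "R ((x#ys)!i) ((x#ys)!Suc i)"
        using ys step.hyps(1) by (cases i) (auto simp: hd_conv_nth)
    qed
    then show ?thesis
      using ys False by (intro exI[of _ "x # ys"]) auto
  qed
qed

lemma star_cycle:
  assumes sym: "\<And>p q. E p q \<Longrightarrow> E q p" and nocyc: "\<nexists>cs. is_cycle E cs"
    and "E a v" "E a w" "v \<noteq> w"
    and "(\<lambda>x y. E x y \<and> x \<noteq> a \<and> y \<noteq> a)\<^sup>*\<^sup>* v w"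
  shows False
proof -
  obtain xs where xs: "xs \<noteq> []" "distinct xs" "hd xs = v" "last xs = w"
    "\<forall>i. Suc i < length xs \<longrightarrow> E (xs!i) (xs!Suc i) \<and> xs!i \<noteq> a \<and> xs!Suc i \<noteq> a"
    using rtranclp_distinct_path[OF assms(6)] by blast
  have len: "length xs \<ge> 2"
  proof (rule ccontr)
    assume "\<not> ?thesis"
    moreover have "length xs > 0" using xs(1) by simp
    ultimately have "length xs = 1" by linarith
    then have "hd xs = last xs" by (cases xs) auto
    then show False using xs assms(5) by simp
  qed
  have anot: "a \<notin> set xs"
  proof
    assume "a \<in> set xs"
    then obtain j where j: "j < length xs" "xs!j = a" by (auto simp: in_set_conv_nth)
    show False
    proof (cases "Suc j < length xs")
      case True then show ?thesis using xs(5) j by blast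
    next
      case False
      then have "Suc (j - 1) < length xs" "Suc (j-1) = j" using len j by auto
      then show ?thesis using xs(5) j by metis
    qed
  qed
  have "is_cycle E (a # xs)"
    unfolding is_cycle_def
  proof (intro conjI allI impI)
    show "3 \<le> length (a # xs)" using len by simp
    show "distinct (a # xs)" using anot xs(2) by simp
    fix i assume i: "Suc i < length (a # xs)"
    show "E ((a # xs) ! i) ((a # xs) ! Suc i)"
    proof (cases i)
      case 0 then show ?thesis using xs(1,3) assms(3) by (simp add: hd_conv_nth)
    next
      case (Suc j) then show ?thesis using xs(5) i by simp
    qed
  next
    show "E (last (a # xs)) (hd (a # xs))" using xs(1,4) assms(4) sym by simp
  qed
  then show False using nocyc by blast
qed

lemma longest_path_cycle:
  assumes fin: "finite V" and irr: "\<And>p. \<not> E p p" and inV: "\<And>p q. E p q \<Longrightarrow> p \<in> V \<and> q \<in> V"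
    and nocyc: "\<nexists>cs. is_cycle E cs"
    and ext: "\<And>z y. z \<in> U \<Longrightarrow> y \<in> U \<Longrightarrow> E z y \<Longrightarrow> \<exists>z'. z' \<in> U \<and> E z z' \<and> z' \<noteq> y"
    and sym: "\<And>p q. E p q \<Longrightarrow> E q p" and UV: "U \<subseteq> V"
    and ab: "E a b" "a \<in> U" "b \<in> U"
  shows False
proof -
  define P where "P xs \<longleftrightarrow> distinct xs \<and> set xs \<subseteq> U \<and> 2 \<le> length xs \<and>
      (\<forall>i. Suc i < length xs \<longrightarrow> E (xs!i) (xs!Suc i))" for xs
  have "a \<noteq> b" using irr ab by blast
  then have P0: "P [a,b]" using ab unfolding P_def by (auto simp: less_Suc_eq nth_Cons split: nat.splits)
  have bnd: "\<forall>xs. P xs \<longrightarrow> length xs < Suc (card V)"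
  proof (intro allI impI)
    fix xs assume "P xs"
    then have d: "distinct xs" and "set xs \<subseteq> V"
      unfolding P_def using UV by auto
    then have "card (set xs) \<le> card V" using fin card_mono by blast
    then show "length xs < Suc (card V)" using distinct_card[OF d] by simp
  qed
  obtain xs where Pxs: "P xs" and mx: "\<forall>ys. P ys \<longrightarrow> length ys \<le> length xs"
    using Lattices_Big.ex_has_greatest_nat[of P "[a,b]" length "Suc (card V)"] P0 bnd by blast
  define n where "n = length xs"
  have n2: "n \<ge> 2" using Pxs unfolding P_def n_def by simp
  define z where "z = xs!(n-1)"
  define y where "y = xs!(n-2)"
  have "Suc (n-2) < n" "Suc (n-2) = n-1" using n2 by auto
  then have Eyz: "E y z" using Pxs unfolding P_def y_def z_def n_def by metis
  have zU: "z \<in> U" "y \<in> U" using Pxs n2 unfolding P_def y_def z_def n_def by auto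
  obtain z' where z': "z' \<in> U" "E z z'" "z' \<noteq> y" using ext[OF zU(1) zU(2) sym[OF Eyz]] by blast
  show False
  proof (cases "z' \<in> set xs")
    case False
    have "P (xs @ [z'])"
      unfolding P_def
    proof (intro conjI allI impI)
      show "distinct (xs @ [z'])" using False Pxs unfolding P_def by simp
      show "set (xs @ [z']) \<subseteq> U" using z' Pxs unfolding P_def by simp
      show "2 \<le> length (xs @ [z'])" using n2 n_def by simp
      fix i assume i: "Suc i < length (xs @ [z'])"
      show "E ((xs @ [z']) ! i) ((xs @ [z']) ! Suc i)"
      proof (cases "Suc i < n")
        case True then show ?thesis using Pxs unfolding P_def n_def by (simp add: nth_append)
      next
        case False
        then have "i = n - 1" "Suc i = n" using i n_def by auto
        then show ?thesis using z'(2) unfolding z_def n_def by (simp add: nth_append)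
      qed
    qed
    then show False using mx by fastforce
  next
    case True
    then obtain k where k: "k < n" "xs!k = z'" by (auto simp: in_set_conv_nth n_def)
    have "k \<noteq> n - 1" using k irr z'(2) z_def by blast
    moreover have "k \<noteq> n - 2" using k z'(3) y_def by blast
    ultimately have k3: "k + 3 \<le> n" using k(1) n2 by linarith
    have "is_cycle E (drop k xs)"
      unfolding is_cycle_def
    proof (intro conjI allI impI)
      show "3 \<le> length (drop k xs)" using k3 n_def by simp
      show "distinct (drop k xs)" using Pxs unfolding P_def by simp
      fix i assume "Suc i < length (drop k xs)"
      then show "E (drop k xs ! i) (drop k xs ! Suc i)"
        using Pxs unfolding P_def n_def by simp
    next
      have "last (drop k xs) = z" using k3 unfolding z_def n_def
        by (simp add: last_drop last_conv_nth)
      moreover have "hd (drop k xs) = z'" using k k3 n_def by (simp add: hd_drop_conv_nth)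
      ultimately show "E (last (drop k xs)) (hd (drop k xs))" using z'(2) by simp
    qed
    then show False using nocyc by blast
  qed
qed

theorem theorem6p6:
  fixes V :: "'a set" and E :: "'a \<Rightarrow> 'a \<Rightarrow> bool" and S :: "'a set"
  assumes "tree V E"
    and "skew_nontrivial V E"
    and "S \<subseteq> skew_white_empty V E"
  shows "psd_forcing_set (SD2_V V E) (SD2_E V E) S \<longleftrightarrow> skew_forcing_set V E S"
proof -
  have g: "graph V E" and nocyc: "\<nexists>cs. is_cycle E cs" using assms(1) by (auto simp: tree_def)
  have finV: "finite V" and sym: "\<And>u v. E u v \<Longrightarrow> E v u" and irr: "\<And>u. \<not> E u u"
    and inV: "\<And>u v. E u v \<Longrightarrow> u \<in> V \<and> v \<in> V" using g by (auto simp: graph_def)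
  define B0 where "B0 = skew_closure_empty V E"
  define W where "W = V - B0"
  define SE where "SE = SD2_E V E"
  have SDV: "SD2_V V E = W" unfolding SD2_V_def skew_white_empty_def W_def B0_def by simp
  have SW: "S \<subseteq> W" using assms(3) unfolding W_def B0_def skew_white_empty_def by simp
  have B0reach: "skew_reach V E {} B0"
  proof -
    have "{B. skew_reach V E {} B} \<subseteq> Pow V" using skew_reach_in[OF _ g] by fastforce
    hence "finite {B. skew_reach V E {} B}" using finV finite_subset by blast
    from skew_reach_Union[OF this] show ?thesis unfolding B0_def skew_closure_empty_def by auto
  qed
  have B0V: "B0 \<subseteq> V" using skew_reach_in[OF B0reach g] by auto
  have fixp: "nbhd E u - B0 \<noteq> {v}" for u v
  proof
    assume h: "nbhd E u - B0 = {v}"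
    hence "E u v" by (auto simp: nbhd_def)
    hence "u \<in> V" using inV by blast
    from skew_reach.step[OF B0reach this h] have "skew_reach V E {} (insert v B0)" .
    hence "v \<in> B0" unfolding skew_closure_empty_def B0_def by blast
    with h show False by auto
  qed
  have nontrE: "\<not> (u \<in> B0 \<and> v \<in> B0)" if "E u v" for u v
  proof -
    have "skew_nontriv_E V E u v = E u v" using assms(2) unfolding skew_nontrivial_def by simp
    then show ?thesis using that unfolding skew_nontriv_E_def B0_def by simp
  qed
  have SEdef: "SE p q \<longleftrightarrow> p \<in> W \<and> q \<in> W \<and> p \<noteq> q \<and> (\<exists>c. E p c \<and> E q c)" for p q
    unfolding SE_def SD2_E_def SDV nbhd_def by auto
  have Windep: False if "E p q" "p \<in> W" "q \<in> W" for p q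
  proof (rule longest_path_cycle[OF finV irr inV nocyc _ sym _ that])
    show "W \<subseteq> V" unfolding W_def by auto
    fix z y assume zy: "z \<in> W" "y \<in> W" "E z y"
    then have "y \<in> nbhd E z - B0" unfolding W_def nbhd_def by auto
    moreover have "nbhd E z - B0 \<noteq> {y}" using fixp by blast
    ultimately obtain z' where "z' \<in> nbhd E z - B0" "z' \<noteq> y" by blast
    then show "\<exists>z'. z' \<in> W \<and> E z z' \<and> z' \<noteq> y" unfolding W_def nbhd_def using inV by auto
  qed
  have dir2: "skew_reach V E (S \<union> B0) (B \<union> B0)" if "psd_reach W SE S B" for B
    using that
  proof (induction rule: psd_reach.induct)
    case (refl B)
    then show ?case by (rule skew_reach.refl)
  next
    case (step B1 B' w v)
    have "v \<in> nbhd SE w" using step.hyps(4) by auto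
    then obtain c where c: "E w c" "E v c" using SEdef by (auto simp: nbhd_def)
    have cV: "c \<in> V" using inV c by blast
    have vW: "v \<in> W" "v \<notin> B'" using step.hyps(3) by auto
    have "nbhd E c - (B' \<union> B0) = {v}"
    proof
      show "{v} \<subseteq> nbhd E c - (B' \<union> B0)" using vW c sym unfolding nbhd_def W_def by auto
      show "nbhd E c - (B' \<union> B0) \<subseteq> {v}"
      proof
        fix x assume x: "x \<in> nbhd E c - (B' \<union> B0)"
        show "x \<in> {v}"
        proof (rule ccontr)
          assume xv: "x \<notin> {v}"
          have Ecx: "E c x" using x by (auto simp: nbhd_def)
          have xW: "x \<in> W" using x inV[OF Ecx] unfolding W_def by auto
          have wx: "w \<noteq> x" using x step.hyps(2) by auto
          have "SE w x" using SEdef xW step.hyps(2) wx c sym[OF Ecx] by auto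
          moreover have "SE v x" using SEdef xW vW xv c sym[OF Ecx] by auto
          then have "x \<in> comp_minus W SE B' v"
            unfolding comp_minus_def using xW x vW by auto
          ultimately have "x \<in> nbhd SE w \<inter> comp_minus W SE B' v" by (auto simp: nbhd_def)
          then show False using step.hyps(4) xv by blast
        qed
      qed
    qed
    from skew_reach.step[OF step.IH cV this]
    show ?case by (simp add: insert_commute)
  qed
  have dir1: "psd_reach W SE S (B' \<inter> W)" if "skew_reach V E X B'" "X = S \<union> B0" for X B'
    using that
  proof (induction rule: skew_reach.induct)
    case (refl B)
    then have "B = S \<union> B0" by simp
    moreover have "(S \<union> B0) \<inter> W = S" using SW unfolding W_def by auto
    ultimately show ?case by (simp add: psd_reach.refl)
  next
    case (step B1 B' u v)
    note IH1 = step.IH[OF step.prems]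
    note force = step.hyps(3)
    show ?case
    proof (cases "v \<in> W \<and> v \<notin> B'")
      case False
      then have "insert v B' \<inter> W = B' \<inter> W" by auto
      then show ?thesis using IH1 by simp
    next
      case True
      have Euv: "E u v" using step.hyps(3) by (auto simp: nbhd_def)
      have uB0: "u \<in> B0"
      proof (rule ccontr)
        assume "u \<notin> B0"
        then have "u \<in> W" using step.hyps(2) W_def by auto
        then show False using Windep[OF Euv] True by blast
      qed
      have "v \<in> nbhd E u - B0" using Euv True W_def by (auto simp: nbhd_def)
      moreover have "nbhd E u - B0 \<noteq> {v}" using fixp by blast
      ultimately obtain w where w: "w \<in> nbhd E u" "w \<notin> B0" "w \<noteq> v" by blast
      have Euw: "E u w" using w by (auto simp: nbhd_def)
      have wB': "w \<in> B'" using w step.hyps(3) by auto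
      have wW: "w \<in> W" using w inV[OF Euw] W_def by auto
      have uW: "u \<notin> W" using uB0 W_def by auto
      have key: "nbhd SE w \<inter> comp_minus W SE (B' \<inter> W) v = {v}"
      proof
        have "SE w v" using SEdef wW True w(3) Euw Euv sym by blast
        then show "{v} \<subseteq> nbhd SE w \<inter> comp_minus W SE (B' \<inter> W) v"
          by (auto simp: nbhd_def comp_minus_def)
        show "nbhd SE w \<inter> comp_minus W SE (B' \<inter> W) v \<subseteq> {v}"
        proof
          fix x assume x: "x \<in> nbhd SE w \<inter> comp_minus W SE (B' \<inter> W) v"
          show "x \<in> {v}"
          proof (rule ccontr)
            assume xv: "x \<notin> {v}"
            define R' where "R' = (\<lambda>p q. SE p q \<and> p \<in> W - B' \<inter> W \<and> q \<in> W - B' \<inter> W)"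
            define RT where "RT = (\<lambda>p q. E p q \<and> p \<noteq> u \<and> q \<noteq> u)"
            have Rvx: "R'\<^sup>*\<^sup>* v x" using x unfolding comp_minus_def R'_def by auto
            have xwhite0: "x \<in> W \<and> x \<notin> B'"
              using Rvx
            proof (cases rule: rtranclp.cases)
              case rtrancl_refl then show ?thesis using xv by auto
            next
              case (rtrancl_into_rtrancl b) then show ?thesis unfolding R'_def by auto
            qed
            then have xwhite: "x \<in> W" "x \<notin> B'" by auto
            have trans: "RT\<^sup>*\<^sup>* v q" if "R'\<^sup>*\<^sup>* v q" for q
              using that
            proof (induction rule: rtranclp_induct)
              case base then show ?case by simp
            next
              case (step p q)
              have pq: "SE p q" "p \<in> W" "q \<in> W" "p \<notin> B'" "q \<notin> B'" using step.hyps(2) unfolding R'_def by auto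
              then obtain c where c: "E p c" "E q c" "p \<noteq> q" using SEdef by blast
              have "c \<noteq> u"
              proof
                assume "c = u"
                then have "p \<in> nbhd E u - B'" "q \<in> nbhd E u - B'" using c pq sym by (auto simp: nbhd_def)
                then show False using force c(3) by auto
              qed
              moreover have "p \<noteq> u" "q \<noteq> u" using pq uW by auto
              ultimately have "RT p c" "RT c q" unfolding RT_def using c sym by auto
              then show ?case using step.IH by (meson rtranclp.rtrancl_into_rtrancl)
            qed
            have RTvx: "RT\<^sup>*\<^sup>* v x" using trans[OF Rvx] .
            have "SE w x" using x by (auto simp: nbhd_def)
            then obtain c where c: "E w c" "E x c" using SEdef by blast
            have "c \<noteq> u"
            proof
              assume "c = u"
              then have "x \<in> nbhd E u - B'" using c xwhite sym by (auto simp: nbhd_def)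
              then show False using step.hyps(3) xv by auto
            qed
            moreover have "x \<noteq> u" "w \<noteq> u" using xwhite wW uW by auto
            ultimately have "RT x c" "RT c w" unfolding RT_def using c sym by auto
            then have "RT\<^sup>*\<^sup>* v w" using RTvx by (meson rtranclp.rtrancl_into_rtrancl)
            then show False using star_cycle[OF sym nocyc Euv Euw] w(3) unfolding RT_def by metis
          qed
        qed
      qed
      have "w \<in> (B' \<inter> W) \<inter> W" "v \<in> W - B' \<inter> W" using wB' wW True by auto
      from psd_reach.step[OF IH1 this key]
      have "psd_reach W SE S (insert v (B' \<inter> W))" .
      moreover have "insert v (B' \<inter> W) = insert v B' \<inter> W" using True by auto
      ultimately show ?thesis by simp
    qed
  qed
  have VW: "W \<union> B0 = V" using B0V W_def by auto
  show ?thesis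
  proof
    assume "psd_forcing_set (SD2_V V E) (SD2_E V E) S"
    then have "psd_reach W SE S W" unfolding psd_forcing_set_def SDV SE_def by simp
    from dir2[OF this] have r1: "skew_reach V E (S \<union> B0) V" using VW by simp
    have "skew_reach V E S (S \<union> B0)" using skew_reach_mono[OF B0reach] by simp
    from skew_reach_trans[OF r1 this] show "skew_forcing_set V E S"
      unfolding skew_forcing_set_def using SW W_def by auto
  next
    assume "skew_forcing_set V E S"
    then have "skew_reach V E S V" and "S \<subseteq> V" unfolding skew_forcing_set_def by auto
    from skew_reach_mono[OF this(1), of "S \<union> B0"] have "skew_reach V E (S \<union> B0) V"
      using B0V \<open>S \<subseteq> V\<close> by (simp add: Un_absorb1)
    from dir1[OF this HOL.refl] have "psd_reach W SE S (V \<inter> W)" .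
    moreover have "V \<inter> W = W" using W_def by auto
    ultimately have "psd_reach W SE S W" by simp
    then show "psd_forcing_set (SD2_V V E) (SD2_E V E) S"
      unfolding psd_forcing_set_def SDV SE_def using SW by simp
  qed
qed

end
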